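(* Let $T=((\Omega,\mathcal{A}),\{(\Omega,\mathcal{M}_i)\}_{i\in N},\{t_i\}_{i\in N})$ be a type space, $I\subseteq N$, and $S\subseteq\Omega$ an $I$-common certainty component. Let $\mathcal{A}^S=\{F\cap S:F\in\mathcal{A}\}$, $\mathcal{M}_i^S=\{F\cap S:F\in\mathcal{M}_i\}$ for $i\in I$, and for $\omega\in S$, $i\in I$ let $t_i^S(\omega,\cdot)$ be the restriction of $t_i(\omega,\cdot)$ to $(S,\mathcal{A}^S)$, i.e. $t_i^S(\omega,F\cap S)=t_i(\omega,F)$ for $F\in\mathcal{A}$. Then $t_i^S$ is well defined and $((S,\mathcal{A}^S),\{(S,\mathcal{M}_i^S)\}_{i\in I},\{t_i^S\}_{i\in I})$ is a type space.
   Context: A field on a set $X$ is a collection of subsets of $X$ containing $X$ and closed under complements and finite intersections. For a field $\mathcal{A}$ on $\Omega$, $\mathrm{pba}(\Omega,\mathcal{A})$ is the set of finitely additive nonnegative $P:\mathcal{A}\to\mathbb{R}$ with $P(\Omega)=1$; $B(\Omega,\mathcal{A})$ the sup-norm closure of the linear span of indicators of sets in $\mathcal{A}$. A type space is $((\Omega,\mathcal{A}),\{(\Omega,\mathcal{M}_i)\}_{i\in N},\{t_i\}_{i\in N})$ with $N$ a nonempty set of players, fields $\mathcal{M}_i\subseteq\mathcal{A}$ on a set $\Omega$, and $t_i:\Omega\times\mathcal{A}\to[0,1]$ with: $t_i(\omega,\cdot)\in\mathrm{pba}(\Omega,\mathcal{A})$ for all $\omega$; $t_i(\cdot,E)\in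 B(\Omega,\mathcal{M}_i)$ for all $E\in\mathcal{A}$; $t_i(\omega,E)=1$ whenever $E\in\mathcal{M}_i$, $\omega\in E$. For $I\subseteq N$, a nonempty $S\subseteq\Omega$ (not necessarily in $\mathcal{A}$) is an $I$-common certainty component if there exists $E\in\mathcal{A}$ with $E\subseteq S$ and $t_i(\omega,E)=1$ for all $\omega\in S$, $i\in I$. *)

theory Defs
  imports Main "HOL-Library.Indicator_Function"
begin

definition field_on :: "'w set \<Rightarrow> 'w set set \<Rightarrow> bool" where
  "field_on X F \<longleftrightarrow> F \<subseteq> Pow X \<and> X \<in> F \<and> (\<forall>E\<in>F. X - E \<in> F)
     \<and> (\<forall>E\<in>F. \<forall>G\<in>F. E \<inter> G \<in> F)"

definition pba :: "'w set \<Rightarrow> 'w set set \<Rightarrow> ('w set \<Rightarrow> real) \<Rightarrow> bool" where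
  "pba X F P \<longleftrightarrow> (\<forall>E\<in>F. 0 \<le> P E) \<and> P X = 1
     \<and> (\<forall>E\<in>F. \<forall>G\<in>F. E \<inter> G = {} \<longrightarrow> P (E \<union> G) = P E + P G)"

definition simple_span :: "'w set set \<Rightarrow> ('w \<Rightarrow> real) set" where
  "simple_span F = {g. \<exists>n (c::nat \<Rightarrow> real) E. (\<forall>k<n. E k \<in> F)
       \<and> g = (\<lambda>w. \<Sum>k<n. c k * indicator (E k) w)}"

definition Bspace :: "'w set \<Rightarrow> 'w set set \<Rightarrow> ('w \<Rightarrow> real) \<Rightarrow> bool" where
  "Bspace X F f \<longleftrightarrow> (\<forall>\<epsilon>>0. \<exists>g\<in>simple_span F. \<forall>w\<in>X. \<bar>f w - g w\<bar> < \<epsilon>)"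

definition type_space :: "'w set \<Rightarrow> 'w set set \<Rightarrow> 'i set \<Rightarrow> ('i \<Rightarrow> 'w set set)
    \<Rightarrow> ('i \<Rightarrow> 'w \<Rightarrow> 'w set \<Rightarrow> real) \<Rightarrow> bool" where
  "type_space Om A N M t \<longleftrightarrow> N \<noteq> {} \<and> field_on Om A
     \<and> (\<forall>i\<in>N. field_on Om (M i) \<and> M i \<subseteq> A)
     \<and> (\<forall>i\<in>N. \<forall>w\<in>Om. pba Om A (t i w))
     \<and> (\<forall>i\<in>N. \<forall>E\<in>A. Bspace Om (M i) (\<lambda>w. t i w E))
     \<and> (\<forall>i\<in>N. \<forall>E\<in>M i. \<forall>w\<in>E. t i w E = 1)"

definition common_certainty_component :: "'w set \<Rightarrow> 'w set set
    \<Rightarrow> ('i \<Rightarrow> 'w \<Rightarrow> 'w set \<Rightarrow> real) \<Rightarrow> 'i set \<Rightarrow> 'w set \<Rightarrow> bool" where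
  "common_certainty_component Om A t I S \<longleftrightarrow> S \<noteq> {} \<and> S \<subseteq> Om
     \<and> (\<exists>E\<in>A. E \<subseteq> S \<and> (\<forall>w\<in>S. \<forall>i\<in>I. t i w E = 1))"

definition trace_on :: "'w set set \<Rightarrow> 'w set \<Rightarrow> 'w set set" where
  "trace_on F S = {G \<inter> S | G. G \<in> F}"

definition restr_kernel :: "'w set set \<Rightarrow> 'w set \<Rightarrow> ('i \<Rightarrow> 'w \<Rightarrow> 'w set \<Rightarrow> real)
    \<Rightarrow> 'i \<Rightarrow> 'w \<Rightarrow> 'w set \<Rightarrow> real" where
  "restr_kernel A S t i w E = t i w (SOME F. F \<in> A \<and> E = F \<inter> S)"

end

theory Submission
  imports Defs
begin

lemma pba_mono:
  assumes "pba Om A P" "field_on Om A" "F \<in> A" "G \<in> A" "F \<subseteq> G"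
  shows "P F \<le> P G"
proof -
  have ss: "A \<subseteq> Pow Om" using assms(2) by (simp add: field_on_def)
  have c: "Om - F \<in> A" using assms(2,3) by (simp add: field_on_def)
  have d: "G \<inter> (Om - F) \<in> A" using assms(2,4) c by (simp add: field_on_def)
  have "G = F \<union> (G \<inter> (Om - F))" using assms(4,5) ss by blast
  moreover have "F \<inter> (G \<inter> (Om - F)) = {}" by blast
  moreover have "\<And>X Y. X \<in> A \<Longrightarrow> Y \<in> A \<Longrightarrow> X \<inter> Y = {} \<Longrightarrow> P (X \<union> Y) = P X + P Y"
    using assms(1) unfolding pba_def by blast
  ultimately have "P G = P F + P (G \<inter> (Om - F))"
    using assms(3) d by metis
  moreover have "0 \<le> P (G \<inter> (Om - F))" using assms(1) d by (simp add: pba_def)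
  ultimately show ?thesis by simp
qed

theorem proposition2:
  fixes Om :: "'w set" and A :: "'w set set" and N I :: "'i set"
    and M :: "'i \<Rightarrow> 'w set set" and t :: "'i \<Rightarrow> 'w \<Rightarrow> 'w set \<Rightarrow> real" and S :: "'w set"
  assumes "type_space Om A N M t"
    and "I \<subseteq> N" and "I \<noteq> {}"
    and "common_certainty_component Om A t I S"
  shows "(\<forall>i\<in>I. \<forall>w\<in>S. \<forall>F\<in>A. \<forall>G\<in>A. F \<inter> S = G \<inter> S \<longrightarrow> t i w F = t i w G)
    \<and> type_space S (trace_on A S) I (\<lambda>i. trace_on (M i) S) (restr_kernel A S t)"
proof -
  have fA: "field_on Om A" using assms(1) by (simp add: type_space_def)
  have ssA: "A \<subseteq> Pow Om" using fA by (simp add: field_on_def)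
  have OmA: "Om \<in> A" using fA by (simp add: field_on_def)
  have compA: "\<And>F. F \<in> A \<Longrightarrow> Om - F \<in> A" using fA by (simp add: field_on_def)
  have intA: "\<And>F G. F \<in> A \<Longrightarrow> G \<in> A \<Longrightarrow> F \<inter> G \<in> A" using fA by (simp add: field_on_def)
  have pbaT: "\<And>i w. i \<in> I \<Longrightarrow> w \<in> Om \<Longrightarrow> pba Om A (t i w)"
    using assms(1,2) by (auto simp: type_space_def)
  have SOm: "S \<subseteq> Om" and Sne: "S \<noteq> {}" using assms(4) by (auto simp: common_certainty_component_def)
  obtain E where E: "E \<in> A" "E \<subseteq> S" "\<And>w i. w \<in> S \<Longrightarrow> i \<in> I \<Longrightarrow> t i w E = 1"
    using assms(4) unfolding common_certainty_component_def by blast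
  have key: "t i w F = t i w (F \<inter> E)" if i: "i \<in> I" and w: "w \<in> S" and F: "F \<in> A" for i w F
  proof -
    have P: "pba Om A (t i w)" using pbaT i w SOm by blast
    have cE: "Om - E \<in> A" using compA E(1) .
    have FE: "F \<inter> E \<in> A" using intA F E(1) by blast
    have FcE: "F \<inter> (Om - E) \<in> A" using intA F cE by blast
    have add: "\<And>X Y. X \<in> A \<Longrightarrow> Y \<in> A \<Longrightarrow> X \<inter> Y = {} \<Longrightarrow> t i w (X \<union> Y) = t i w X + t i w Y"
      using P unfolding pba_def by blast
    have e1: "F = (F \<inter> E) \<union> (F \<inter> (Om - E))" using F ssA by blast
    have s: "t i w F = t i w (F \<inter> E) + t i w (F \<inter> (Om - E))"
    proof -
      have "(F \<inter> E) \<inter> (F \<inter> (Om - E)) = {}" by blast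
      then have "t i w ((F \<inter> E) \<union> (F \<inter> (Om - E))) = t i w (F \<inter> E) + t i w (F \<inter> (Om - E))"
        by (rule add[OF FE FcE])
      then show ?thesis using e1 by simp
    qed
    have e2: "Om = E \<union> (Om - E)" using E(1) ssA by blast
    have "t i w Om = t i w E + t i w (Om - E)"
    proof -
      have "E \<inter> (Om - E) = {}" by blast
      then have "t i w (E \<union> (Om - E)) = t i w E + t i w (Om - E)" by (rule add[OF E(1) cE])
      then show ?thesis using e2 by simp
    qed
    moreover have "t i w Om = 1" using P by (simp add: pba_def)
    ultimately have z: "t i w (Om - E) = 0" using E(3) w i by simp
    have "t i w (F \<inter> (Om - E)) \<le> t i w (Om - E)"
      using pba_mono[OF P fA FcE cE] by blast
    moreover have "0 \<le> t i w (F \<inter> (Om - E))" using P FcE by (simp add: pba_def)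
    ultimately show ?thesis using s z by simp
  qed
  have part1: "\<forall>i\<in>I. \<forall>w\<in>S. \<forall>F\<in>A. \<forall>G\<in>A. F \<inter> S = G \<inter> S \<longrightarrow> t i w F = t i w G"
  proof (intro ballI impI)
    fix i w F G assume h: "i \<in> I" "w \<in> S" "F \<in> A" "G \<in> A" "F \<inter> S = G \<inter> S"
    have "F \<inter> E = G \<inter> E" using h(5) E(2) by blast
    then show "t i w F = t i w G" using key h by metis
  qed
  have rk: "restr_kernel A S t i w (F \<inter> S) = t i w F" if "i \<in> I" "w \<in> S" "F \<in> A" for i w F
  proof -
    have "\<exists>G. G \<in> A \<and> F \<inter> S = G \<inter> S" using that by blast
    then have "(SOME G. G \<in> A \<and> F \<inter> S = G \<inter> S) \<in> A \<and> F \<inter> S = (SOME G. G \<in> A \<and> F \<inter> S = G \<inter> S) \<inter> S"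
      by (rule someI_ex)
    then show ?thesis unfolding restr_kernel_def using part1 that by metis
  qed
  have field_trace: "field_on S (trace_on F S)" if "field_on Om F" for F
  proof -
    have a: "F \<subseteq> Pow Om" "Om \<in> F" "\<And>X. X \<in> F \<Longrightarrow> Om - X \<in> F" "\<And>X Y. X \<in> F \<Longrightarrow> Y \<in> F \<Longrightarrow> X \<inter> Y \<in> F"
      using that by (auto simp: field_on_def)
    show ?thesis unfolding field_on_def trace_on_def
    proof (intro conjI ballI)
      show "{G \<inter> S |G. G \<in> F} \<subseteq> Pow S" by blast
      show "S \<in> {G \<inter> S |G. G \<in> F}" using a(2) SOm by blast
    next
      fix X assume "X \<in> {G \<inter> S |G. G \<in> F}"
      then obtain G where "G \<in> F" "X = G \<inter> S" by blast
      then show "S - X \<in> {G \<inter> S |G. G \<in> F}" using a(3)[of G] SOm by (intro CollectI exI[of _ "Om - G"]) blast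
    next
      fix X Y assume "X \<in> {G \<inter> S |G. G \<in> F}" "Y \<in> {G \<inter> S |G. G \<in> F}"
      then obtain G H where "G \<in> F" "X = G \<inter> S" "H \<in> F" "Y = H \<inter> S" by blast
      then show "X \<inter> Y \<in> {G \<inter> S |G. G \<in> F}" using a(4)[of G H] by (intro CollectI exI[of _ "G \<inter> H"]) blast
    qed
  qed
  have fM: "\<And>i. i \<in> I \<Longrightarrow> field_on Om (M i) \<and> M i \<subseteq> A" using assms(1,2) by (auto simp: type_space_def)
  have pbaS: "pba S (trace_on A S) (restr_kernel A S t i w)" if i: "i \<in> I" and w: "w \<in> S" for i w
  proof -
    have P: "pba Om A (t i w)" using pbaT i w SOm by blast
    show ?thesis unfolding pba_def
    proof (intro conjI ballI impI)
      fix X assume "X \<in> trace_on A S"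
      then obtain F where "F \<in> A" "X = F \<inter> S" by (auto simp: trace_on_def)
      then show "0 \<le> restr_kernel A S t i w X" using rk i w P by (simp add: pba_def)
    next
      have "S = Om \<inter> S" using SOm by blast
      then show "restr_kernel A S t i w S = 1" using rk[OF i w OmA] P by (simp add: pba_def)
    next
      fix X Y assume "X \<in> trace_on A S" "Y \<in> trace_on A S" and d: "X \<inter> Y = {}"
      then obtain F G where F: "F \<in> A" "X = F \<inter> S" and G: "G \<in> A" "Y = G \<inter> S" by (auto simp: trace_on_def)
      define G' where "G' = G \<inter> (Om - F)"
      have G'A: "G' \<in> A" unfolding G'_def using intA compA F G by blast
      have FG: "F \<union> G' \<in> A"
      proof -
        have "F \<union> G' = Om - ((Om - F) \<inter> (Om - G'))" using F G'A ssA by blast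
        moreover have "Om - ((Om - F) \<inter> (Om - G')) \<in> A" using intA compA F(1) G'A by blast
        ultimately show ?thesis by simp
      qed
      have G'S: "G' \<inter> S = Y" using d F G SOm unfolding G'_def by blast
      have U: "(F \<union> G') \<inter> S = X \<union> Y" using G'S F by blast
      have "t i w (F \<union> G') = t i w F + t i w G'"
      proof -
        have "F \<inter> G' = {}" unfolding G'_def by blast
        then show ?thesis using P F(1) G'A unfolding pba_def by blast
      qed
      then show "restr_kernel A S t i w (X \<union> Y) = restr_kernel A S t i w X + restr_kernel A S t i w Y"
        using rk[OF i w FG] rk[OF i w F(1)] rk[OF i w G'A] U F(2) G'S by simp
    qed
  qed
  have BS: "Bspace S (trace_on (M i) S) (\<lambda>w. restr_kernel A S t i w X)" if i: "i \<in> I" and X: "X \<in> trace_on A S" for i X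
  proof -
    obtain F where F: "F \<in> A" "X = F \<inter> S" using X by (auto simp: trace_on_def)
    have B: "Bspace Om (M i) (\<lambda>w. t i w F)" using assms(1,2) i F by (auto simp: type_space_def)
    show ?thesis unfolding Bspace_def
    proof (intro allI impI)
      fix e :: real assume "e > 0"
      then obtain g where g: "g \<in> simple_span (M i)" "\<forall>w\<in>Om. \<bar>t i w F - g w\<bar> < e"
        using B unfolding Bspace_def by blast
      have "\<exists>(n::nat) c D. (\<forall>k<n. D k \<in> M i) \<and> g = (\<lambda>w. \<Sum>k<n. c k * indicator (D k) w)"
        using g(1) unfolding simple_span_def mem_Collect_eq .
      then obtain n :: nat and c D where D: "\<forall>k<n. D k \<in> M i" "g = (\<lambda>w. \<Sum>k<n. c k * indicator (D k) w)"
        by blast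
      define g' where "g' = (\<lambda>w. \<Sum>k<n. c k * indicator (D k \<inter> S) w)"
      have DS: "\<forall>k<n. D k \<inter> S \<in> trace_on (M i) S" using D(1) by (auto simp: trace_on_def)
      have g'in: "g' \<in> simple_span (trace_on (M i) S)"
        unfolding simple_span_def g'_def
        by (rule CollectI, rule exI[of _ n], rule exI[of _ c], rule exI[of _ "\<lambda>k. D k \<inter> S"]) (simp add: DS)
      have "\<forall>w\<in>S. \<bar>restr_kernel A S t i w X - g' w\<bar> < e"
      proof
        fix w assume w: "w \<in> S"
        have "g' w = g w" unfolding g'_def D(2) using w by (simp add: indicator_def)
        then show "\<bar>restr_kernel A S t i w X - g' w\<bar> < e" using rk[OF i w F(1)] F(2) g(2) w SOm by auto
      qed
      then show "\<exists>g\<in>simple_span (trace_on (M i) S). \<forall>w\<in>S. \<bar>restr_kernel A S t i w X - g w\<bar> < e"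
        using g'in by blast
    qed
  qed
  have one: "restr_kernel A S t i w X = 1" if i: "i \<in> I" and X: "X \<in> trace_on (M i) S" and w: "w \<in> X" for i X w
  proof -
    obtain F where F: "F \<in> M i" "X = F \<inter> S" using X by (auto simp: trace_on_def)
    have FA: "F \<in> A" using fM i F by blast
    have "t i w F = 1" using assms(1,2) i F w by (auto simp: type_space_def)
    then show ?thesis using rk[OF i _ FA] F w by auto
  qed
  have sub: "trace_on (M i) S \<subseteq> trace_on A S" if "i \<in> I" for i
    using fM[OF that] unfolding trace_on_def by blast
  have ts: "type_space S (trace_on A S) I (\<lambda>i. trace_on (M i) S) (restr_kernel A S t)"
    unfolding type_space_def
  proof (intro conjI)
    show "I \<noteq> {}" by (rule assms(3))
    show "field_on S (trace_on A S)" using field_trace[OF fA] .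
    show "\<forall>i\<in>I. field_on S (trace_on (M i) S) \<and> trace_on (M i) S \<subseteq> trace_on A S"
      using field_trace fM sub by blast
    show "\<forall>i\<in>I. \<forall>w\<in>S. pba S (trace_on A S) (restr_kernel A S t i w)" using pbaS by blast
    show "\<forall>i\<in>I. \<forall>E\<in>trace_on A S. Bspace S (trace_on (M i) S) (\<lambda>w. restr_kernel A S t i w E)"
      using BS by blast
    show "\<forall>i\<in>I. \<forall>E\<in>trace_on (M i) S. \<forall>w\<in>E. restr_kernel A S t i w E = 1" using one by blast
  qed
  show ?thesis using part1 ts by (rule conjI)
qed

end
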